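(* For each $i=1,\dots,n-1$, in the ring of $n\times n$ matrices over $\mathbf{Z}[F_n\rtimes B_n]$, $$(\phi(\sigma_i)+\sigma_i g_i I)(\phi(\sigma_i)-\sigma_i I)=0,$$ where $\sigma_i g_i I$ and $\sigma_i I$ denote the scalar matrices with diagonal entries $\sigma_i g_i$ and $\sigma_i$.
   Context: The braid group $B_n$ ($n\ge2$) has generators $\sigma_1,\dots,\sigma_{n-1}$ with relations $\sigma_i\sigma_j=\sigma_j\sigma_i$ for $|i-j|>1$ and $\sigma_i\sigma_j\sigma_i=\sigma_j\sigma_i\sigma_j$ for $|i-j|=1$. Let $F_n$ be the free group on $g_1,\dots,g_n$. The semidirect product $F_n\rtimes B_n$ is the group generated by $F_n$ and $B_n$ subject to the additional relations $g_{i+1}\sigma_i=\sigma_i g_i$, $g_i\sigma_i=\sigma_i g_i g_{i+1}g_i^{-1}$, and $g_j\sigma_i=\sigma_i g_j$ for $j\notin\{i,i+1\}$. For $i=1,\dots,n-1$ let $R_i=\begin{bmatrix}0&g_i\\1&1-g_i\end{bmatrix}$, and let $\phi$ be the homomorphism from $B_n$ to the invertible $n\times n$ matrices over the group ring $\mathbf{Z}[F_n\rtimes B_n]$ (usual matrix multiplication) given by $\phi(\sigma_i)=\sigma_i\cdot\mathrm{diag}(I_{i-1},R_i,I_{n-i-1})$, where the scalar $\sigma_i$ multiplies every entry on the left. *)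

theory Defs
  imports "Jordan_Normal_Form.Matrix"
begin

text \<open>The generator images of the braid group B_n and the free group F_n in the group ring
  Z[F_n x| B_n] are modelled by elements of an arbitrary ring satisfying the defining relations
  (universal property of the group ring of a presented group).  Matrix indices are 0-based:
  the block R_i sits in rows/columns i-1 and i (i.e. i and i+1 in 1-based numbering).\<close>

definition R_block_mat :: "nat \<Rightarrow> (nat \<Rightarrow> 'r::ring_1) \<Rightarrow> nat \<Rightarrow> 'r mat" where
  "R_block_mat n g i = mat n n (\<lambda>(r, c).
     if r = i - 1 \<and> c = i - 1 then 0
     else if r = i - 1 \<and> c = i then g i
     else if r = i \<and> c = i - 1 then 1
     else if r = i \<and> c = i then 1 - g i
     else if r = c then 1 else 0)"

definition phi_gen :: "nat \<Rightarrow> (nat \<Rightarrow> 'r::ring_1) \<Rightarrow> (nat \<Rightarrow> 'r) \<Rightarrow> nat \<Rightarrow> 'r mat" where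
  "phi_gen n \<sigma> g i = \<sigma> i \<cdot>\<^sub>m R_block_mat n g i"

end

theory Submission
  imports Defs
begin

lemma X:
  fixes s a :: "'r::ring_1" and n i :: nat
  assumes i: "1 \<le> i" "i < n"
  shows "(s \<cdot>\<^sub>m R_block_mat n g i + (s * g i) \<cdot>\<^sub>m 1\<^sub>m n) * (s \<cdot>\<^sub>m R_block_mat n g i - s \<cdot>\<^sub>m 1\<^sub>m n) = 0\<^sub>m n n"
proof (rule eq_matI)
  fix r c assume r: "r < dim_row (0\<^sub>m n n :: 'r mat)" and c: "c < dim_col (0\<^sub>m n n :: 'r mat)"
  define A where "A k = (if r = i - 1 \<and> k = i - 1 then s * g i
     else if r = i - 1 \<and> k = i then s * g i
     else if r = i \<and> k = i - 1 then s
     else if r = i \<and> k = i then s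
     else if r = k then s + s * g i else 0)" for k
  define B where "B k = (if k = i - 1 \<and> c = i - 1 then - s
     else if k = i - 1 \<and> c = i then s * g i
     else if k = i \<and> c = i - 1 then s
     else if k = i \<and> c = i then - (s * g i)
     else 0)" for k
  have e: "((s \<cdot>\<^sub>m R_block_mat n g i + (s * g i) \<cdot>\<^sub>m 1\<^sub>m n) * (s \<cdot>\<^sub>m R_block_mat n g i - s \<cdot>\<^sub>m 1\<^sub>m n)) $$ (r,c)
     = (\<Sum>k\<in>{0..<n}. A k * B k)"
    using r c
    apply (simp add: scalar_prod_def)
    apply (rule sum.cong, simp)
    apply (simp add: R_block_mat_def A_def B_def algebra_simps)
    done
  have "(\<Sum>k\<in>{0..<n}. A k * B k) = 0"
  proof (cases "r = i - 1 \<or> r = i")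
    case True
    have "(\<Sum>k\<in>{0..<n}. A k * B k) = (\<Sum>k\<in>{i-1, i}. A k * B k)"
      using i True by (intro sum.mono_neutral_right) (auto simp: A_def)
    also have "\<dots> = 0" using i True
      by (auto simp: A_def B_def algebra_simps mult.assoc)
    finally show ?thesis .
  next
    case False
    then show ?thesis by (intro sum.neutral) (auto simp: A_def B_def)
  qed
  then show "((s \<cdot>\<^sub>m R_block_mat n g i + (s * g i) \<cdot>\<^sub>m 1\<^sub>m n) * (s \<cdot>\<^sub>m R_block_mat n g i - s \<cdot>\<^sub>m 1\<^sub>m n)) $$ (r,c) = 0\<^sub>m n n $$ (r,c)"
    using e r c by simp
qed auto

theorem proposition5p1:
  fixes \<sigma> \<sigma>' g g' :: "nat \<Rightarrow> 'r::ring_1" and n i :: nat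
  assumes n2: "n \<ge> 2"
    and sigma_unit: "\<forall>k\<in>{1..n-1}. \<sigma> k * \<sigma>' k = 1 \<and> \<sigma>' k * \<sigma> k = 1"
    and g_unit: "\<forall>j\<in>{1..n}. g j * g' j = 1 \<and> g' j * g j = 1"
    and braid_comm: "\<forall>k\<in>{1..n-1}. \<forall>l\<in>{1..n-1}.
                        (k + 1 < l \<or> l + 1 < k) \<longrightarrow> \<sigma> k * \<sigma> l = \<sigma> l * \<sigma> k"
    and braid_rel: "\<forall>k\<in>{1..n-1}. \<forall>l\<in>{1..n-1}.
                        (l = k + 1 \<or> k = l + 1) \<longrightarrow> \<sigma> k * \<sigma> l * \<sigma> k = \<sigma> l * \<sigma> k * \<sigma> l"
    and act1: "\<forall>k\<in>{1..n-1}. g (k + 1) * \<sigma> k = \<sigma> k * g k"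
    and act2: "\<forall>k\<in>{1..n-1}. g k * \<sigma> k = \<sigma> k * g k * g (k + 1) * g' k"
    and act3: "\<forall>k\<in>{1..n-1}. \<forall>j\<in>{1..n}. j \<noteq> k \<and> j \<noteq> k + 1 \<longrightarrow> g j * \<sigma> k = \<sigma> k * g j"
    and i: "i \<in> {1..n-1}"
  shows "(phi_gen n \<sigma> g i + (\<sigma> i * g i) \<cdot>\<^sub>m 1\<^sub>m n) * (phi_gen n \<sigma> g i - \<sigma> i \<cdot>\<^sub>m 1\<^sub>m n)
         = 0\<^sub>m n n"
  using X[of i n \<open>\<sigma> i\<close> g] i n2 unfolding phi_gen_def by auto

end
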